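(* Let $\mathcal M=(M,<,+,0,\ldots)$ be a definably complete expansion of an ordered group. Let $C\subseteq M^m$ and $P$ be definable sets with $C$ closed and bounded, and let $f:C\times P\to M$ be a definable function. Then $f$ is equi-continuous with respect to $P$ if and only if it is uniformly equi-continuous with respect to $P$.
   Context: "Definable" means definable in $\mathcal M$ with parameters; $(M,<)$ is dense without endpoints. Definably complete: every definable subset of $M$ has sup and inf in $M\cup\{\pm\infty\}$. For $x\in M^m$, $|x|$ denotes $\max_i|x_i|$. $f$ is equi-continuous with respect to $P$ if for all $\varepsilon>0$ and $x\in C$ there is $\delta>0$ such that for all $p\in P$ and $x'\in C$, $|x-x'|<\delta$ implies $|f(x,p)-f(x',p)|<\varepsilon$. It is uniformly equi-continuous with respect to $P$ if for all $\varepsilon>0$ there is $\delta>0$ such that for all $p\in P$ and $x,x'\in C$, $|x-x'|<\delta$ implies $|f(x,p)-f(x',p)|<\varepsilon$. *)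

theory Defs
  imports Main
begin

text \<open>A "definable structure" on M is a family
  D n of subsets of M^n (the sets definable with parameters in some expansion of
  (M,<,+,0)), given by van den Dries' closure axioms.\<close>

definition tuples :: "nat \<Rightarrow> 'a list set" where
  "tuples n = {xs. length xs = n}"

definition definable_structure ::
  "(nat \<Rightarrow> 'a::{linorder,group_add} list set \<Rightarrow> bool) \<Rightarrow> bool" where
  "definable_structure D \<longleftrightarrow>
     (\<forall>n A. D n A \<longrightarrow> A \<subseteq> tuples n)
   \<and> (\<forall>n. D n (tuples n))
   \<and> (\<forall>n A B. D n A \<longrightarrow> D n B \<longrightarrow> D n (A - B))
   \<and> (\<forall>n k A g. D n A \<longrightarrow> (\<forall>i<n. g i < k) \<longrightarrow>
        D k {ys \<in> tuples k. map (\<lambda>i. ys ! g i) [0..<n] \<in> A})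
   \<and> (\<forall>n A. D (Suc n) A \<longrightarrow> D n (butlast ` A))
   \<and> (\<forall>a. D 1 {[a]})
   \<and> D 2 {[x, y] | x y. x = y}
   \<and> D 2 {[x, y] | x y. x < y}
   \<and> D 3 {[x, y, z] | x y z. z = x + y}"

definition definably_complete ::
  "(nat \<Rightarrow> 'a::{linorder,group_add} list set \<Rightarrow> bool) \<Rightarrow> bool" where
  "definably_complete D \<longleftrightarrow>
     (\<forall>A. D 1 A \<longrightarrow>
        (let S = {x. [x] \<in> A} in
           (S \<noteq> {} \<and> (\<exists>b. \<forall>x\<in>S. x \<le> b) \<longrightarrow>
              (\<exists>s. (\<forall>x\<in>S. x \<le> s) \<and> (\<forall>b. (\<forall>x\<in>S. x \<le> b) \<longrightarrow> s \<le> b)))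
         \<and> (S \<noteq> {} \<and> (\<exists>b. \<forall>x\<in>S. b \<le> x) \<longrightarrow>
              (\<exists>s. (\<forall>x\<in>S. s \<le> x) \<and> (\<forall>b. (\<forall>x\<in>S. b \<le> x) \<longrightarrow> b \<le> s)))))"

definition gabs :: "'a::{linorder,group_add} \<Rightarrow> 'a" where
  "gabs x = max x (- x)"

definition vnorm :: "'a::{linorder,group_add} list \<Rightarrow> 'a" where
  "vnorm xs = foldr max (map gabs xs) 0"

definition vdist :: "'a::{linorder,group_add} list \<Rightarrow> 'a list \<Rightarrow> 'a" where
  "vdist xs ys = vnorm (map2 (-) xs ys)"

definition closed_in_tuples :: "nat \<Rightarrow> 'a::{linorder,group_add} list set \<Rightarrow> bool" where
  "closed_in_tuples m C \<longleftrightarrow>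
     (\<forall>x \<in> tuples m - C. \<exists>e>0. \<forall>y \<in> tuples m. vdist x y < e \<longrightarrow> y \<notin> C)"

definition bounded_in_tuples :: "'a::{linorder,group_add} list set \<Rightarrow> bool" where
  "bounded_in_tuples C \<longleftrightarrow> (\<exists>R. \<forall>x\<in>C. vnorm x \<le> R)"

definition definable_function ::
  "(nat \<Rightarrow> 'a::{linorder,group_add} list set \<Rightarrow> bool) \<Rightarrow> nat \<Rightarrow> nat \<Rightarrow>
    'a list set \<Rightarrow> 'a list set \<Rightarrow> ('a list \<Rightarrow> 'a list \<Rightarrow> 'a) \<Rightarrow> bool" where
  "definable_function D m k C P f \<longleftrightarrow>
     D (m + k + 1) {x @ p @ [f x p] | x p. x \<in> C \<and> p \<in> P}"

definition equi_continuous ::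
  "'a::{linorder,group_add} list set \<Rightarrow> 'a list set \<Rightarrow> ('a list \<Rightarrow> 'a list \<Rightarrow> 'a) \<Rightarrow> bool" where
  "equi_continuous C P f \<longleftrightarrow>
     (\<forall>e>0. \<forall>x\<in>C. \<exists>d>0. \<forall>p\<in>P. \<forall>x'\<in>C.
        vdist x x' < d \<longrightarrow> gabs (f x p - f x' p) < e)"

definition uniformly_equi_continuous ::
  "'a::{linorder,group_add} list set \<Rightarrow> 'a list set \<Rightarrow> ('a list \<Rightarrow> 'a list \<Rightarrow> 'a) \<Rightarrow> bool" where
  "uniformly_equi_continuous C P f \<longleftrightarrow>
     (\<forall>e>0. \<exists>d>0. \<forall>p\<in>P. \<forall>x\<in>C. \<forall>x'\<in>C.
        vdist x x' < d \<longrightarrow> gabs (f x p - f x' p) < e)"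

end

theory Submission
  imports Defs
begin

datatype 'b fm = Atm "'b list set" "'b list \<Rightarrow> 'b list" | Neg "'b fm" | Cnj "'b fm" "'b fm"
  | Dsj "'b fm" "'b fm" | Imp "'b fm" "'b fm" | Ex "'b fm" | All "'b fm"
  | ExB nat "'b fm" | AllB nat "'b fm"

fun eval :: "'b fm \<Rightarrow> 'b list \<Rightarrow> bool" where
  "eval (Atm S g) e = (g e \<in> S)"
| "eval (Neg p) e = (\<not> eval p e)"
| "eval (Cnj p q) e = (eval p e \<and> eval q e)"
| "eval (Dsj p q) e = (eval p e \<or> eval q e)"
| "eval (Imp p q) e = (eval p e \<longrightarrow> eval q e)"
| "eval (Ex p) e = (\<exists>a. eval p (a # e))"
| "eval (All p) e = (\<forall>a. eval p (a # e))"
| "eval (ExB j p) e = (\<exists>ys. length ys = j \<and> eval p (ys @ e))"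
| "eval (AllB j p) e = (\<forall>ys. length ys = j \<longrightarrow> eval p (ys @ e))"

lemma map_nth_app: "map (nth (e @ r)) [0..<length e] = e"
  by (rule nth_equalityI) (auto simp: nth_append)

locale dcog =
  fixes D :: "nat \<Rightarrow> 'a::{dense_linorder,no_top,no_bot,group_add} list set \<Rightarrow> bool"
  assumes mono: "\<And>a b c :: 'a. a \<le> b \<Longrightarrow> c + a \<le> c + b \<and> a + c \<le> b + c"
    and ds: "definable_structure D"
    and dc: "definably_complete D"
begin

lemma addl_le: "a \<le> b \<Longrightarrow> c + a \<le> c + (b::'a)" using mono by blast
lemma addr_le: "a \<le> b \<Longrightarrow> a + c \<le> b + (c::'a)" using mono by blast
lemma addl_less: "a < b \<Longrightarrow> c + a < c + (b::'a)"
proof -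
  assume h: "a < b"
  then have "c + a \<le> c + b" by (intro addl_le) simp
  moreover have "c + a \<noteq> c + b" using h by simp
  ultimately show ?thesis by (rule le_neq_trans)
qed
lemma addr_less: "a < b \<Longrightarrow> a + c < b + (c::'a)"
proof -
  assume h: "a < b"
  then have "a + c \<le> b + c" by (intro addr_le) simp
  moreover have "a + c \<noteq> b + c" using h by simp
  ultimately show ?thesis by (rule le_neq_trans)
qed
lemma add_less2: "a < b \<Longrightarrow> c < d \<Longrightarrow> a + c < b + (d::'a)"
proof -
  assume h: "a < b" "c < d"
  have "a + c < b + c" using h(1) by (rule addr_less)
  moreover have "b + c < b + d" using h(2) by (rule addl_less)
  ultimately show ?thesis by (rule less_trans)
qed
lemma add_le2: "a \<le> b \<Longrightarrow> c \<le> d \<Longrightarrow> a + c \<le> b + (d::'a)"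
proof -
  assume h: "a \<le> b" "c \<le> d"
  have "a + c \<le> b + c" using h(1) by (rule addr_le)
  moreover have "b + c \<le> b + d" using h(2) by (rule addl_le)
  ultimately show ?thesis by (rule order_trans)
qed
lemma neg_le: "a \<le> b \<Longrightarrow> -b \<le> -(a::'a)"
proof -
  assume "a \<le> b"
  then have "-b + a + -a \<le> -b + b + -a" by (intro addr_le addl_le)
  then show ?thesis by (simp add: add.assoc)
qed
lemma neg_less: "a < b \<Longrightarrow> -b < -(a::'a)"
proof -
  assume h: "a < b"
  then have "-b \<le> -a" by (intro neg_le) simp
  moreover have "-b \<noteq> -a" using h by simp
  ultimately show ?thesis by (rule le_neq_trans)
qed
lemma less_diff: "a - b < d \<longleftrightarrow> a < d + (b::'a)"
proof
  assume "a - b < d" then have "a - b + b < d + b" by (rule addr_less)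
  then show "a < d + b" by simp
next
  assume "a < d + b" then have "a + - b < d + b + - b" by (rule addr_less)
  then show "a - b < d" by (simp add: add.assoc)
qed
lemma le_diff: "a - b \<le> d \<longleftrightarrow> a \<le> d + (b::'a)"
proof
  assume "a - b \<le> d" then have "a - b + b \<le> d + b" by (rule addr_le)
  then show "a \<le> d + b" by simp
next
  assume "a \<le> d + b" then have "a + - b \<le> d + b + - b" by (rule addr_le)
  then show "a - b \<le> d" by (simp add: add.assoc)
qed

lemma gabs_less: "gabs x < d \<longleftrightarrow> x < d \<and> - x < d"
  by (simp add: gabs_def)
lemma gabs_le: "gabs x \<le> d \<longleftrightarrow> x \<le> d \<and> - x \<le> d"
  by (simp add: gabs_def)
lemma gabs_nonneg: "0 \<le> gabs (x::'a)"
proof (cases "0 \<le> x")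
  case True then show ?thesis by (simp add: gabs_def le_max_iff_disj)
next
  case False then have "x < 0" by simp
  then have "-0 < -x" by (rule neg_less)
  then have "0 \<le> -x" by simp
  then show ?thesis by (simp add: gabs_def le_max_iff_disj)
qed
lemma gabs_zero: "gabs (0::'a) = 0" by (simp add: gabs_def)
lemma gabs_commute: "gabs (a - b) = gabs (b - (a::'a))"
  by (simp add: gabs_def max.commute)
lemma gabs_add_less: "gabs a < d \<Longrightarrow> gabs b < d \<Longrightarrow> gabs (a + b) < d + (d::'a)"
  unfolding gabs_less minus_add by (metis add_less2)
lemma gabs_add_le: "gabs a \<le> p \<Longrightarrow> gabs b \<le> q \<Longrightarrow> gabs (a + b) \<le> max (p + q) (q + (p::'a))"
proof -
  assume "gabs a \<le> p" "gabs b \<le> q"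
  then have h: "a \<le> p" "-a \<le> p" "b \<le> q" "-b \<le> q" by (auto simp: gabs_le)
  have "a + b \<le> p + q" using h by (intro add_le2)
  moreover have "-b + -a \<le> q + p" using h by (intro add_le2)
  ultimately have "max (a + b) (-b + -a) \<le> max (p + q) (q + p)" by (rule max.mono)
  then show ?thesis by (simp add: gabs_def minus_add)
qed
lemma diff_split: "a - c = (a - b) + (b - (c::'a))"
proof -
  have "(a - b) + (b - c) = a + (-b + b) + -c" by (simp only: diff_conv_add_uminus add.assoc)
  then show ?thesis by simp
qed

lemma half: "0 < (e::'a) \<Longrightarrow> \<exists>d>0. d + d \<le> e"
proof -
  assume e: "0 < e"
  obtain a where a: "0 < a" "a < e" using e dense by blast
  define d where "d = min a (-a + e)"
  have "-a + a < -a + e" using a(2) by (rule addl_less)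
  then have "0 < -a + e" by simp
  then have d0: "0 < d" using a by (simp add: d_def)
  have "d + d \<le> a + d" by (rule addr_le) (simp add: d_def)
  also have "\<dots> \<le> a + (-a + e)" by (rule addl_le) (simp add: d_def)
  finally have "d + d \<le> e" by (simp add: add.assoc[symmetric])
  then show ?thesis using d0 by blast
qed

lemma vnorm_less: "vnorm xs < d \<longleftrightarrow> 0 < d \<and> (\<forall>y\<in>set xs. gabs y < (d::'a))"
  by (induction xs) (auto simp: vnorm_def)
lemma vnorm_le: "vnorm xs \<le> d \<longleftrightarrow> 0 \<le> d \<and> (\<forall>y\<in>set xs. gabs y \<le> (d::'a))"
  by (induction xs) (auto simp: vnorm_def)

lemma vdist_less: "length x = length y \<Longrightarrow>
   vdist x y < d \<longleftrightarrow> 0 < d \<and> (\<forall>i<length x. gabs (x!i - y!i) < (d::'a))"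
  unfolding vdist_def vnorm_less by (auto simp: set_zip)
lemma vdist_Cons: "vdist (a#x) (b#y) < d \<longleftrightarrow> gabs (a - b) < d \<and> vdist x y < (d::'a)"
  unfolding vdist_def vnorm_less by auto
lemma vdist_refl: "vdist x x < d \<longleftrightarrow> 0 < (d::'a)"
  by (auto simp add: vdist_less gabs_zero)
lemma vdist_sym: "length x = length y \<Longrightarrow> vdist x y < d \<longleftrightarrow> vdist y x < (d::'a)"
  by (simp add: vdist_less gabs_commute)
lemma vdist_tri: "length x = length y \<Longrightarrow> length y = length z \<Longrightarrow>
   vdist x y < d \<Longrightarrow> vdist y z < d \<Longrightarrow> vdist x z < d + (d::'a)"
proof -
  assume l: "length x = length y" "length y = length z" and h: "vdist x y < d" "vdist y z < d"
  have d: "0 < d" using h l by (simp add: vdist_less)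
  have "0 + 0 < d + d" using d d by (rule add_less2)
  moreover have "gabs (x!i - z!i) < d + d" if "i < length x" for i
  proof -
    have "gabs (x!i - y!i) < d" "gabs (y!i - z!i) < d" using h l that by (auto simp: vdist_less)
    then have "gabs ((x!i - y!i) + (y!i - z!i)) < d + d" by (rule gabs_add_less)
    then show ?thesis by (metis diff_split)
  qed
  ultimately show ?thesis using l by (simp add: vdist_less)
qed
lemma vdist_mono: "vdist x y < d \<Longrightarrow> d \<le> d' \<Longrightarrow> vdist x y < (d'::'a)"
  by simp
subsection \<open>Definability\<close>

lemmas dsc = ds[unfolded definable_structure_def]
lemma D_sub: "D n A \<Longrightarrow> A \<subseteq> tuples n" using dsc[THEN conjunct1] by blast
lemma D_univ: "D n (tuples n)" using dsc[THEN conjunct2, THEN conjunct1] by blast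
lemma D_diff: "D n A \<Longrightarrow> D n B \<Longrightarrow> D n (A - B)"
  using dsc[THEN conjunct2, THEN conjunct2, THEN conjunct1] by blast
lemma D_pre: "D n A \<Longrightarrow> (\<forall>i<n. g i < k) \<Longrightarrow> D k {ys \<in> tuples k. map (\<lambda>i. ys ! g i) [0..<n] \<in> A}"
  using dsc[THEN conjunct2, THEN conjunct2, THEN conjunct2, THEN conjunct1] by blast
lemma D_proj: "D (Suc n) A \<Longrightarrow> D n (butlast ` A)"
  using dsc[THEN conjunct2, THEN conjunct2, THEN conjunct2, THEN conjunct2, THEN conjunct1] by blast
lemma D_Sg: "D 1 {[a]}"
  using dsc[THEN conjunct2, THEN conjunct2, THEN conjunct2, THEN conjunct2, THEN conjunct2, THEN conjunct1] by blast
lemma D_Eq: "D 2 {[x, y] | x y. x = y}"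
  using dsc[THEN conjunct2, THEN conjunct2, THEN conjunct2, THEN conjunct2, THEN conjunct2, THEN conjunct2, THEN conjunct1] .
lemma D_Lt: "D 2 {[x, y] | x y. x < y}"
  using dsc[THEN conjunct2, THEN conjunct2, THEN conjunct2, THEN conjunct2, THEN conjunct2, THEN conjunct2, THEN conjunct2, THEN conjunct1] .
lemma D_Pl: "D 3 {[x, y, z] | x y z. z = x + y}"
  using dsc[THEN conjunct2, THEN conjunct2, THEN conjunct2, THEN conjunct2, THEN conjunct2, THEN conjunct2, THEN conjunct2, THEN conjunct2] .

definition Def :: "nat \<Rightarrow> ('a list \<Rightarrow> bool) \<Rightarrow> bool" where
  "Def n P \<longleftrightarrow> D n {xs \<in> tuples n. P xs}"

lemma Def_cong: "Def n P \<Longrightarrow> (\<And>e. length e = n \<Longrightarrow> P e = Q e) \<Longrightarrow> Def n Q"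
proof -
  assume "Def n P" "\<And>e. length e = n \<Longrightarrow> P e = Q e"
  moreover have "{xs \<in> tuples n. P xs} = {xs \<in> tuples n. Q xs}"
    using calculation(2) by (auto simp: tuples_def)
  ultimately show ?thesis by (simp add: Def_def)
qed

lemma Def_false: "Def n (\<lambda>_. False)"
  using D_diff[OF D_univ D_univ, of n] by (simp add: Def_def)
lemma D_empty: "D n {}"
  using D_diff[OF D_univ D_univ, of n] by simp

lemma Def_not: "Def n P \<Longrightarrow> Def n (\<lambda>e. \<not> P e)"
proof -
  assume "Def n P"
  then have "D n (tuples n - {xs \<in> tuples n. P xs})" unfolding Def_def by (intro D_diff D_univ)
  moreover have "tuples n - {xs \<in> tuples n. P xs} = {xs \<in> tuples n. \<not> P xs}" by auto
  ultimately show ?thesis by (simp add: Def_def)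
qed

lemma Def_and: "Def n P \<Longrightarrow> Def n Q \<Longrightarrow> Def n (\<lambda>e. P e \<and> Q e)"
proof -
  assume "Def n P" "Def n Q"
  then have "D n ({xs \<in> tuples n. P xs} - ({xs \<in> tuples n. P xs} - {xs \<in> tuples n. Q xs}))"
    unfolding Def_def by (intro D_diff)
  moreover have "{xs \<in> tuples n. P xs} - ({xs \<in> tuples n. P xs} - {xs \<in> tuples n. Q xs})
     = {xs \<in> tuples n. P xs \<and> Q xs}" by auto
  ultimately show ?thesis by (simp add: Def_def)
qed

lemma Def_or: "Def n P \<Longrightarrow> Def n Q \<Longrightarrow> Def n (\<lambda>e. P e \<or> Q e)"
  using Def_not[OF Def_and[OF Def_not Def_not]] by simp

lemma Def_imp: "Def n P \<Longrightarrow> Def n Q \<Longrightarrow> Def n (\<lambda>e. P e \<longrightarrow> Q e)"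
  using Def_or[OF Def_not] by simp

definition sel :: "nat \<Rightarrow> ('a list \<Rightarrow> 'a list) \<Rightarrow> bool" where
  "sel n g \<longleftrightarrow> (\<exists>is. (\<forall>i\<in>set is. i < n) \<and> (\<forall>e. length e = n \<longrightarrow> g e = map (nth e) is))"

lemma Def_atom: "sel n g \<Longrightarrow> D j S \<Longrightarrow> Def n (\<lambda>e. g e \<in> S)"
proof -
  assume "sel n g" and S: "D j S"
  then obtain "is" where is1: "\<forall>i\<in>set is. i < n" and is2: "\<And>e. length e = n \<Longrightarrow> g e = map (nth e) is"
    unfolding sel_def by blast
  show ?thesis
  proof (cases "length is = j")
    case True
    have "D n {ys \<in> tuples n. map (\<lambda>i. ys ! (is ! i)) [0..<j] \<in> S}"
      using S is1 True by (intro D_pre) auto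
    moreover have "map (\<lambda>i. ys ! (is ! i)) [0..<j] = map (nth ys) is" for ys :: "'a list"
      using True by (intro nth_equalityI) auto
    ultimately have "Def n (\<lambda>e. map (nth e) is \<in> S)" by (simp add: Def_def)
    then show ?thesis by (rule Def_cong) (simp add: is2)
  next
    case False
    have "g e \<notin> S" if "length e = n" for e
      using D_sub[OF S] False is2[OF that] by (auto simp: tuples_def)
    then show ?thesis using Def_false Def_cong by metis
  qed
qed

lemma Def_ex_end: "Def (Suc n) P \<Longrightarrow> Def n (\<lambda>e. \<exists>a. P (e @ [a]))"
proof -
  assume "Def (Suc n) P"
  then have "D n (butlast ` {xs \<in> tuples (Suc n). P xs})" unfolding Def_def by (rule D_proj)
  moreover have "butlast ` {xs \<in> tuples (Suc n). P xs} = {xs \<in> tuples n. \<exists>a. P (xs @ [a])}"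
  proof (intro equalityI subsetI)
    fix x assume "x \<in> butlast ` {xs \<in> tuples (Suc n). P xs}"
    then obtain ys where ys: "length ys = Suc n" "P ys" "x = butlast ys" by (auto simp: tuples_def)
    then have "ys = butlast ys @ [last ys]" by (metis append_butlast_last_id list.size(3) nat.distinct(1))
    then show "x \<in> {xs \<in> tuples n. \<exists>a. P (xs @ [a])}" using ys by (auto simp: tuples_def) metis
  next
    fix x assume "x \<in> {xs \<in> tuples n. \<exists>a. P (xs @ [a])}"
    then obtain a where "length x = n" "P (x @ [a])" by (auto simp: tuples_def)
    then show "x \<in> butlast ` {xs \<in> tuples (Suc n). P xs}"
      by (intro image_eqI[of _ _ "x @ [a]"]) (auto simp: tuples_def)
  qed
  ultimately show ?thesis by (simp add: Def_def)
qed

lemma Def_ex: "Def (Suc n) P \<Longrightarrow> Def n (\<lambda>e. \<exists>a. P (a # e))"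
proof -
  assume P: "Def (Suc n) P"
  have "sel (Suc n) (\<lambda>ys. map (nth ys) (n # [0..<n]))" unfolding sel_def
    by (intro exI[of _ "n # [0..<n]"]) auto
  then have "Def (Suc n) (\<lambda>ys. map (nth ys) (n # [0..<n]) \<in> {xs \<in> tuples (Suc n). P xs})"
    using P unfolding Def_def by (intro Def_atom[unfolded Def_def]) auto
  then have "Def (Suc n) (\<lambda>ys. P (map (nth ys) (n # [0..<n])))"
    by (rule Def_cong) (auto simp: tuples_def)
  then have "Def n (\<lambda>e. \<exists>a. P (map (nth (e @ [a])) (n # [0..<n])))" by (rule Def_ex_end)
  then show ?thesis
  proof (rule Def_cong)
    fix e :: "'a list" assume "length e = n"
    then have "map (nth (e @ [a])) (n # [0..<n]) = a # e" for a
      using map_nth_app[of e "[a]"] by (simp add: nth_append)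
    then show "(\<exists>a. P (map (nth (e @ [a])) (n # [0..<n]))) = (\<exists>a. P (a # e))" by simp
  qed
qed

lemma Def_all: "Def (Suc n) P \<Longrightarrow> Def n (\<lambda>e. \<forall>a. P (a # e))"
  using Def_not[OF Def_ex[OF Def_not]] by simp

lemma Def_exs: "Def (j + n) P \<Longrightarrow> Def n (\<lambda>e. \<exists>ys. length ys = j \<and> P (ys @ e))"
proof (induction j arbitrary: n P)
  case 0
  then have "Def n P" by simp
  then show ?case by (rule Def_cong) auto
next
  case (Suc j)
  then have "Def (j + Suc n) P" by simp
  then have "Def (Suc n) (\<lambda>e'. \<exists>ys. length ys = j \<and> P (ys @ e'))" by (rule Suc.IH)
  then have "Def n (\<lambda>e. \<exists>a ys. length ys = j \<and> P (ys @ a # e))" by (rule Def_ex)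
  then show ?case
  proof (rule Def_cong)
    fix e :: "'a list"
    show "(\<exists>a ys. length ys = j \<and> P (ys @ a # e)) = (\<exists>ys. length ys = Suc j \<and> P (ys @ e))"
    proof
      assume "\<exists>a ys. length ys = j \<and> P (ys @ a # e)"
      then obtain a ys where "length ys = j" "P (ys @ a # e)" by blast
      then show "\<exists>ys. length ys = Suc j \<and> P (ys @ e)" by (intro exI[of _ "ys @ [a]"]) auto
    next
      assume "\<exists>ys. length ys = Suc j \<and> P (ys @ e)"
      then obtain ys where ys: "length ys = Suc j" "P (ys @ e)" by blast
      then have "ys = butlast ys @ [last ys]" by (metis append_butlast_last_id list.size(3) nat.distinct(1))
      then have "P (butlast ys @ last ys # e)" using ys by (metis append.assoc append_Cons append_Nil)
      then show "\<exists>a ys. length ys = j \<and> P (ys @ a # e)" using ys(1) by (intro exI[of _ "last ys"] exI[of _ "butlast ys"]) auto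
    qed
  qed
qed

lemma Def_alls: "Def (j + n) P \<Longrightarrow> Def n (\<lambda>e. \<forall>ys. length ys = j \<longrightarrow> P (ys @ e))"
  using Def_not[OF Def_exs[OF Def_not]] by simp

fun wf :: "nat \<Rightarrow> 'a fm \<Rightarrow> bool" where
  "wf n (Atm S g) = (sel n g \<and> (\<exists>j. D j S))"
| "wf n (Neg p) = wf n p"
| "wf n (Cnj p q) = (wf n p \<and> wf n q)"
| "wf n (Dsj p q) = (wf n p \<and> wf n q)"
| "wf n (Imp p q) = (wf n p \<and> wf n q)"
| "wf n (Ex p) = wf (Suc n) p"
| "wf n (All p) = wf (Suc n) p"
| "wf n (ExB j p) = wf (j + n) p"
| "wf n (AllB j p) = wf (j + n) p"

lemma wf_Def: "wf n p \<Longrightarrow> Def n (eval p)"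
proof (induction p arbitrary: n)
  case (Atm S g) then show ?case by (auto intro: Def_atom)
next
  case (Neg p) then show ?case using Def_not by auto
next
  case (Cnj p q) then show ?case using Def_and[of n "eval p" "eval q"] by auto
next
  case (Dsj p q) then show ?case using Def_or[of n "eval p" "eval q"] by auto
next
  case (Imp p q) then show ?case using Def_imp[of n "eval p" "eval q"] by auto
next
  case (Ex p) then show ?case using Def_ex[of n "eval p"] by auto
next
  case (All p) then show ?case using Def_all[of n "eval p"] by auto
next
  case (ExB j p) then show ?case using Def_exs[of j n "eval p"] by auto
next
  case (AllB j p) then show ?case using Def_alls[of j n "eval p"] by auto
qed

lemma Def_fm: "wf n p \<Longrightarrow> (\<And>e. length e = n \<Longrightarrow> eval p e = P e) \<Longrightarrow> Def n P"
  using wf_Def Def_cong by blast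

lemma sel_nth1[simp]: "i < n \<Longrightarrow> sel n (\<lambda>e. [e!i])"
  unfolding sel_def by (intro exI[of _ "[i]"]) auto
lemma sel_Nil[simp]: "sel n (\<lambda>e. [])"
  unfolding sel_def by (intro exI[of _ "[]"]) auto
lemma sel_Cons[simp]: "i < n \<Longrightarrow> sel n g \<Longrightarrow> sel n (\<lambda>e. e!i # g e)"
  unfolding sel_def by (metis list.map(2) set_ConsD)
lemma sel_app[simp]: "sel n g \<Longrightarrow> sel n h \<Longrightarrow> sel n (\<lambda>e. g e @ h e)"
  unfolding sel_def by (metis map_append Un_iff set_append)
lemma sel_blk[simp]: "a + l \<le> n \<Longrightarrow> sel n (\<lambda>e. take l (drop a e))"
  unfolding sel_def
  by (intro exI[of _ "[a..<a+l]"]) (auto intro!: nth_equalityI)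

lemma sel_take[simp]: "l \<le> n \<Longrightarrow> sel n (\<lambda>e. take l e)"
  using sel_blk[of 0 l n] by simp

lemma ex_D_Lt[simp]: "\<exists>j. D j {[x, y] | x y. x < y}" using D_Lt by blast
lemma ex_D_Eq[simp]: "\<exists>j. D j {[x, y] | x y. x = y}" using D_Eq by blast
lemma ex_D_Pl[simp]: "\<exists>j. D j {[x, y, z] | x y z. z = x + y}" using D_Pl by blast
lemma ex_D_Sg[simp]: "\<exists>j. D j {[a]}" using D_Sg by blast
lemma ex_D_empty[simp]: "\<exists>j. D j {}" using D_empty by blast

definition fT :: "'a fm" where "fT = Neg (Atm {} (\<lambda>e. []))"
definition fLt :: "nat \<Rightarrow> nat \<Rightarrow> 'a fm" where "fLt i j = Atm {[x, y] | x y. x < y} (\<lambda>e. [e!i, e!j])"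
definition fEq :: "nat \<Rightarrow> nat \<Rightarrow> 'a fm" where "fEq i j = Atm {[x, y] | x y. x = y} (\<lambda>e. [e!i, e!j])"
definition fPl :: "nat \<Rightarrow> nat \<Rightarrow> nat \<Rightarrow> 'a fm" where "fPl i j l = Atm {[x, y, z] | x y z. z = x + y} (\<lambda>e. [e!i, e!j, e!l])"
definition fC :: "nat \<Rightarrow> 'a \<Rightarrow> 'a fm" where "fC i c = Atm {[c]} (\<lambda>e. [e!i])"
definition fLe :: "nat \<Rightarrow> nat \<Rightarrow> 'a fm" where "fLe i j = Dsj (fLt i j) (fEq i j)"
definition fPos :: "nat \<Rightarrow> 'a fm" where "fPos i = Ex (Cnj (fC 0 0) (fLt 0 (Suc i)))"
definition fDL :: "nat \<Rightarrow> nat \<Rightarrow> nat \<Rightarrow> 'a fm" where "fDL i j l = Ex (Cnj (fPl (Suc l) (Suc j) 0) (fLt (Suc i) 0))"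
definition fGL :: "nat \<Rightarrow> nat \<Rightarrow> nat \<Rightarrow> 'a fm" where "fGL i j l = Cnj (fDL i j l) (fDL j i l)"
definition fGLc :: "nat \<Rightarrow> nat \<Rightarrow> 'a \<Rightarrow> 'a fm" where "fGLc i j c = Ex (Cnj (fC 0 c) (fGL (Suc i) (Suc j) 0))"
fun fBall :: "nat \<Rightarrow> (nat \<Rightarrow> 'a fm) \<Rightarrow> 'a fm" where
  "fBall 0 F = fT"
| "fBall (Suc m) F = Cnj (fBall m F) (F m)"
definition fVd :: "nat \<Rightarrow> nat \<Rightarrow> nat \<Rightarrow> nat \<Rightarrow> 'a fm" where
  "fVd a b m l = Cnj (fPos l) (fBall m (\<lambda>i. fGL (a+i) (b+i) l))"

lemma eval_fT[simp]: "eval fT e" by (simp add: fT_def)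
lemma eval_fLt[simp]: "eval (fLt i j) e = (e!i < e!j)" by (simp add: fLt_def)
lemma eval_fEq[simp]: "eval (fEq i j) e = (e!i = e!j)" by (auto simp: fEq_def)
lemma eval_fPl[simp]: "eval (fPl i j l) e = (e!l = e!i + e!j)" by (simp add: fPl_def)
lemma eval_fC[simp]: "eval (fC i c) e = (e!i = c)" by (simp add: fC_def)
lemma eval_fLe[simp]: "eval (fLe i j) e = (e!i \<le> e!j)" by (auto simp: fLe_def)
lemma eval_fPos[simp]: "eval (fPos i) e = (0 < e!i)" by (simp add: fPos_def)
lemma eval_fDL[simp]: "eval (fDL i j l) e = (e!i - e!j < e!l)" by (simp add: fDL_def less_diff)
lemma eval_fGL[simp]: "eval (fGL i j l) e = (gabs (e!i - e!j) < e!l)"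
  by (simp add: fGL_def gabs_less)
lemma eval_fGLc[simp]: "eval (fGLc i j c) e = (gabs (e!i - e!j) < c)" by (simp add: fGLc_def)
lemma eval_fBall[simp]: "eval (fBall m F) e = (\<forall>i<m. eval (F i) e)"
  by (induction m) (auto simp: less_Suc_eq)
lemma eval_fVd[simp]: "a + m \<le> length e \<Longrightarrow> b + m \<le> length e \<Longrightarrow>
  eval (fVd a b m l) e = (vdist (take m (drop a e)) (take m (drop b e)) < e!l)"
  by (simp add: fVd_def vdist_less)

lemma wf_fT[simp]: "wf n fT" by (simp add: fT_def)
lemma wf_fLt[simp]: "i < n \<Longrightarrow> j < n \<Longrightarrow> wf n (fLt i j)"
  unfolding fLt_def wf.simps by (intro conjI, simp, rule exI, rule D_Lt)
lemma wf_fEq[simp]: "i < n \<Longrightarrow> j < n \<Longrightarrow> wf n (fEq i j)"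
  unfolding fEq_def wf.simps by (intro conjI, simp, rule exI, rule D_Eq)
lemma wf_fPl[simp]: "i < n \<Longrightarrow> j < n \<Longrightarrow> l < n \<Longrightarrow> wf n (fPl i j l)"
  unfolding fPl_def wf.simps by (intro conjI, simp, rule exI, rule D_Pl)
lemma wf_fC[simp]: "i < n \<Longrightarrow> wf n (fC i c)" by (simp add: fC_def)
lemma wf_fLe[simp]: "i < n \<Longrightarrow> j < n \<Longrightarrow> wf n (fLe i j)" by (simp add: fLe_def)
lemma wf_fPos[simp]: "i < n \<Longrightarrow> wf n (fPos i)" by (simp add: fPos_def)
lemma wf_fDL[simp]: "i < n \<Longrightarrow> j < n \<Longrightarrow> l < n \<Longrightarrow> wf n (fDL i j l)" by (simp add: fDL_def)
lemma wf_fGL[simp]: "i < n \<Longrightarrow> j < n \<Longrightarrow> l < n \<Longrightarrow> wf n (fGL i j l)" by (simp add: fGL_def)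
lemma wf_fGLc[simp]: "i < n \<Longrightarrow> j < n \<Longrightarrow> wf n (fGLc i j c)" by (simp add: fGLc_def)
lemma wf_fBall: "(\<And>i. i < m \<Longrightarrow> wf n (F i)) \<Longrightarrow> wf n (fBall m F)"
  by (induction m) auto
lemma wf_fVd[simp]: "a + m \<le> n \<Longrightarrow> b + m \<le> n \<Longrightarrow> l < n \<Longrightarrow> wf n (fVd a b m l)"
  unfolding fVd_def by (auto intro!: wf_fBall)

subsection \<open>One-dimensional compactness\<close>

lemma dc_sup: "D 1 A \<Longrightarrow> S = {x. [x] \<in> A} \<Longrightarrow> S \<noteq> {} \<Longrightarrow> (\<exists>b. \<forall>x\<in>S. x \<le> b) \<Longrightarrow>
   \<exists>s. (\<forall>x\<in>S. x \<le> s) \<and> (\<forall>b. (\<forall>x\<in>S. x \<le> b) \<longrightarrow> s \<le> b)"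
  using dc unfolding definably_complete_def Let_def by blast
lemma dc_inf: "D 1 A \<Longrightarrow> S = {x. [x] \<in> A} \<Longrightarrow> S \<noteq> {} \<Longrightarrow> (\<exists>b. \<forall>x\<in>S. b \<le> x) \<Longrightarrow>
   \<exists>s. (\<forall>x\<in>S. s \<le> x) \<and> (\<forall>b. (\<forall>x\<in>S. b \<le> x) \<longrightarrow> b \<le> s)"
  using dc unfolding definably_complete_def Let_def by blast

lemma L1:
  assumes def: "Def 2 (\<lambda>e. A (e!0) (e!1))"
    and ne: "\<And>t. 0 < t \<Longrightarrow> \<exists>a. A t a"
    and bd: "\<And>t a. 0 < t \<Longrightarrow> A t a \<Longrightarrow> gabs a \<le> R"
    and cl: "\<And>t a. 0 < t \<Longrightarrow> \<forall>u>0. \<exists>b. A t b \<and> gabs (a - b) < u \<Longrightarrow> A t a"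
    and mn: "\<And>s t a. 0 < s \<Longrightarrow> s \<le> t \<Longrightarrow> A s a \<Longrightarrow> A t a"
  shows "\<exists>a. \<forall>t>0. A t a"
proof -
  define SA where "SA = {e \<in> tuples 2. A (e!0) (e!1)}"
  have DSA: "D 2 SA" using def by (simp add: Def_def SA_def)
  then have eDSA[simp]: "\<exists>j. D j SA" by blast
  have memSA[simp]: "[a, b] \<in> SA \<longleftrightarrow> A a b" for a b by (simp add: SA_def tuples_def)
  have defA: "Def 1 (\<lambda>e. A t (e!0))" for t
    by (rule Def_fm[where p = "Ex (Cnj (fC 0 t) (Atm SA (\<lambda>e. [e!0, e!1])))"]) simp_all
  define IsSup where "IsSup t v \<longleftrightarrow> (\<forall>b. A t b \<longrightarrow> b \<le> v) \<and> (\<forall>w. (\<forall>b. A t b \<longrightarrow> b \<le> w) \<longrightarrow> v \<le> w)" for t v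
  have sup_ex: "\<exists>v. IsSup t v" if t: "0 < t" for t
  proof -
    have h1: "D 1 {e \<in> tuples 1. A t (e!0)}" using defA[of t] by (simp add: Def_def)
    have h2: "{x. A t x} = {x. [x] \<in> {e \<in> tuples 1. A t (e!0)}}" by (simp add: tuples_def)
    have h3: "{x. A t x} \<noteq> {}" using ne[OF t] by auto
    have h4: "\<exists>b. \<forall>x\<in>{x. A t x}. x \<le> b" using bd[OF t] by (auto simp: gabs_le)
    obtain s where "(\<forall>x\<in>{x. A t x}. x \<le> s) \<and> (\<forall>b. (\<forall>x\<in>{x. A t x}. x \<le> b) \<longrightarrow> s \<le> b)"
      using dc_sup[OF h1 h2 h3 h4] by blast
    then show ?thesis unfolding IsSup_def by auto
  qed
  have sup_in: "A t v" if t: "0 < t" and v: "IsSup t v" for t v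
  proof (rule cl[OF t], intro allI impI)
    fix u :: 'a assume u: "0 < u"
    have "-u < -0" using u by (rule neg_less)
    then have "-u + v < 0 + v" by (intro addr_less) simp
    then have "\<not> v \<le> -u + v" by simp
    then obtain b where b: "A t b" "\<not> b \<le> -u + v" using v unfolding IsSup_def by blast
    then have "-u + v < b" by simp
    then have "u + (-u + v) < u + b" by (rule addl_less)
    then have "v < u + b" by (simp add: add.assoc[symmetric])
    then have 1: "v - b < u" by (simp add: less_diff)
    have "b \<le> 0 + v" using b(1) v unfolding IsSup_def by simp
    then have "b - v \<le> 0" by (simp only: le_diff)
    then have "-(v - b) < u" using u by simp
    then show "\<exists>b. A t b \<and> gabs (v - b) < u" using 1 b(1) by (auto simp: gabs_less)
  qed
  have defT: "Def 1 (\<lambda>e. \<exists>t. 0 < t \<and> IsSup t (e!0))"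
    by (rule Def_fm[where p = "Ex (Cnj (fPos 0) (Cnj (All (Imp (Atm SA (\<lambda>e. [e!1, e!0])) (fLe 0 2)))
         (All (Imp (All (Imp (Atm SA (\<lambda>e. [e!2, e!0])) (fLe 0 1))) (fLe 2 0)))))"])
       (simp_all add: IsSup_def)
  obtain c :: 'a where c: "0 < c" using gt_ex by blast
  obtain v0 where v0: "IsSup c v0" using sup_ex[OF c] by blast
  have h1: "D 1 {e \<in> tuples 1. \<exists>t. 0 < t \<and> IsSup t (e!0)}" using defT by (simp add: Def_def)
  have h2: "{x. \<exists>t. 0 < t \<and> IsSup t x} = {x. [x] \<in> {e \<in> tuples 1. \<exists>t. 0 < t \<and> IsSup t (e!0)}}"
    by (simp add: tuples_def)
  have h3: "{x. \<exists>t. 0 < t \<and> IsSup t x} \<noteq> {}" using v0 c by auto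
  have h4: "\<exists>b. \<forall>x\<in>{x. \<exists>t. 0 < t \<and> IsSup t x}. b \<le> x"
  proof (intro exI ballI)
    fix x assume "x \<in> {x. \<exists>t. 0 < t \<and> IsSup t x}"
    then obtain t where t: "0 < t" "IsSup t x" by auto
    obtain a where a: "A t a" using ne[OF t(1)] by blast
    have "-a \<le> R" using bd[OF t(1) a] by (simp add: gabs_le)
    then have "-R \<le> -(-a)" by (rule neg_le)
    moreover have "a \<le> x" using t(2) a unfolding IsSup_def by blast
    ultimately show "-R \<le> x" by simp
  qed
  obtain \<sigma> where sg: "\<forall>x\<in>{x. \<exists>t. 0 < t \<and> IsSup t x}. \<sigma> \<le> x"
     "\<forall>b. (\<forall>x\<in>{x. \<exists>t. 0 < t \<and> IsSup t x}. b \<le> x) \<longrightarrow> b \<le> \<sigma>"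
    using dc_inf[OF h1 h2 h3 h4] by blast
  have "A t \<sigma>" if t: "0 < t" for t
  proof (rule cl[OF t], intro allI impI)
    fix u :: 'a assume u: "0 < u"
    have "0 + \<sigma> < u + \<sigma>" using u by (rule addr_less)
    then have "\<not> u + \<sigma> \<le> \<sigma>" by simp
    then obtain v t' where v: "0 < t'" "IsSup t' v" "\<not> u + \<sigma> \<le> v" using sg(2) by blast
    define t'' where "t'' = min t t'"
    have t'': "0 < t''" "t'' \<le> t" "t'' \<le> t'" using t v by (auto simp: t''_def)
    obtain v'' where v'': "IsSup t'' v''" using sup_ex[OF t''(1)] by blast
    have "v'' \<le> v" using v'' v(2) mn[OF t''(1) t''(3)] unfolding IsSup_def by blast
    then have vl: "v'' < u + \<sigma>" using v(3) by simp
    have sv: "\<sigma> \<le> v''" using sg(1) v'' t'' by blast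
    have "A t v''" using mn[OF t''(1) t''(2) sup_in[OF t''(1) v'']] .
    moreover have "\<sigma> - v'' < u"
    proof -
      have "\<sigma> \<le> 0 + v''" using sv by simp
      then have "\<sigma> - v'' \<le> 0" by (simp only: le_diff)
      then show ?thesis using u by simp
    qed
    moreover have "-(\<sigma> - v'') < u" using vl by (simp add: less_diff)
    ultimately show "\<exists>b. A t b \<and> gabs (\<sigma> - b) < u" by (auto simp: gabs_less)
  qed
  then show ?thesis by blast
qed

subsection \<open>Compactness in dimension n\<close>

lemma LM:
  "Def (Suc n) (\<lambda>e. B (e!0) (drop 1 e)) \<Longrightarrow> (\<forall>t>0. \<exists>x. B t x) \<Longrightarrow>
   (\<forall>t x. 0 < t \<longrightarrow> B t x \<longrightarrow> length x = n) \<Longrightarrow>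
   (\<forall>t x. 0 < t \<longrightarrow> B t x \<longrightarrow> (\<forall>i<n. gabs (x!i) \<le> R)) \<Longrightarrow>
   (\<forall>t x. 0 < t \<longrightarrow> length x = n \<longrightarrow> (\<forall>u>0. \<exists>y. B t y \<and> vdist x y < u) \<longrightarrow> B t x) \<Longrightarrow>
   (\<forall>s t x. 0 < s \<longrightarrow> s \<le> t \<longrightarrow> B s x \<longrightarrow> B t x) \<Longrightarrow>
   \<exists>x. length x = n \<and> (\<forall>t>0. B t x)"
proof (induction n arbitrary: B R)
  case 0
  obtain c :: 'a where c: "0 < c" using gt_ex by blast
  have "B t []" if "0 < t" for t using "0.prems"(2,3) that by fastforce
  then show ?case by auto
next
  case (Suc n)
  note def = Suc.prems(1) and ne = Suc.prems(2) and len = Suc.prems(3) and bd = Suc.prems(4)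
    and cl = Suc.prems(5) and mn = Suc.prems(6)
  obtain c :: 'a where c: "0 < c" using gt_ex by blast
  define SB where "SB = {e \<in> tuples (Suc (Suc n)). B (e!0) (drop 1 e)}"
  have DSB: "D (Suc (Suc n)) SB" using def by (simp add: Def_def SB_def)
  then have eDSB[simp]: "\<exists>j. D j SB" by blast
  have memSB[simp]: "t # x \<in> SB \<longleftrightarrow> length x = Suc n \<and> B t x" for t x by (simp add: SB_def tuples_def)
  define A1 where "A1 t a \<longleftrightarrow> (\<forall>u>0. \<exists>x. length x = Suc n \<and> B t x \<and> gabs (x!0 - a) < u)" for t a
  have defA1: "Def 2 (\<lambda>e. A1 (e!0) (e!1))"
  proof (rule Def_fm[where p = "All (Imp (fPos 0) (ExB (Suc n) (Cnj (Atm SB (\<lambda>e. e!(Suc n + 1) # take (Suc n) e))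
       (fGL 0 (Suc n + 2) (Suc n)))))"])
    show "wf 2 (All (Imp (fPos 0) (ExB (Suc n) (Cnj (Atm SB (\<lambda>e. e!(Suc n + 1) # take (Suc n) e))
       (fGL 0 (Suc n + 2) (Suc n))))))" by simp
    fix e :: "'a list" assume "length e = 2"
    then show "eval (All (Imp (fPos 0) (ExB (Suc n) (Cnj (Atm SB (\<lambda>e. e!(Suc n + 1) # take (Suc n) e))
       (fGL 0 (Suc n + 2) (Suc n)))))) e = A1 (e!0) (e!1)"
      unfolding A1_def by (simp add: nth_append cong: conj_cong)
  qed
  have "\<exists>a. \<forall>t>0. A1 t a"
  proof (rule L1[OF defA1])
    fix t :: 'a assume t: "0 < t"
    then obtain x where x: "B t x" using ne by blast
    then have "length x = Suc n" using len t by blast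
    then show "\<exists>a. A1 t a" using x unfolding A1_def by (intro exI[of _ "x!0"]) (auto simp: gabs_zero)
  next
    fix t a :: 'a assume t: "0 < t" and a: "A1 t a"
    then obtain x where x: "length x = Suc n" "B t x" "gabs (x!0 - a) < c" using c unfolding A1_def by blast
    have "gabs (a - x!0) \<le> c" using x(3) by (simp add: gabs_commute)
    moreover have "gabs (x!0) \<le> R" using bd t x by blast
    ultimately have "gabs ((a - x!0) + x!0) \<le> max (c + R) (R + c)" by (rule gabs_add_le)
    then show "gabs a \<le> max (c + R) (R + c)" by simp
  next
    fix t a :: 'a assume t: "0 < t" and h: "\<forall>u>0. \<exists>b. A1 t b \<and> gabs (a - b) < u"
    show "A1 t a" unfolding A1_def
    proof (intro allI impI)
      fix u :: 'a assume u: "0 < u"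
      obtain u' where u': "0 < u'" "u' + u' \<le> u" using half[OF u] by blast
      obtain b where b: "A1 t b" "gabs (a - b) < u'" using h u' by blast
      obtain x where x: "length x = Suc n" "B t x" "gabs (x!0 - b) < u'" using b(1) u' unfolding A1_def by blast
      have "gabs (b - a) < u'" using b(2) by (simp add: gabs_commute)
      then have "gabs ((x!0 - b) + (b - a)) < u' + u'" using x(3) by (intro gabs_add_less)
      then have "gabs (x!0 - a) < u" using u' by (simp add: diff_split[symmetric])
      then show "\<exists>x. length x = Suc n \<and> B t x \<and> gabs (x!0 - a) < u" using x by blast
    qed
  next
    fix s t a :: 'a assume "0 < s" "s \<le> t" "A1 s a"
    then show "A1 t a" using mn unfolding A1_def by blast
  qed
  then obtain a where a: "\<And>t. 0 < t \<Longrightarrow> A1 t a" by blast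
  define B' where "B' t z \<longleftrightarrow> length z = n \<and>
     (\<forall>u>0. \<exists>x. length x = Suc n \<and> B t x \<and> gabs (x!0 - a) < t \<and> vdist z (drop 1 x) < u)" for t z
  define phi where "phi = Cnj fT (All (Imp (fPos 0) (ExB (Suc n) (Cnj (Atm SB (\<lambda>e. e!(Suc n + 1) # take (Suc n) e))
       (Cnj (Ex (Cnj (fC 0 a) (fGL 1 0 (Suc n + 2)))) (fVd (Suc n + 2) 1 n (Suc n)))))))"
  have defB': "Def (Suc n) (\<lambda>e. B' (e!0) (drop 1 e))"
  proof (rule Def_fm[where p = phi])
    show "wf (Suc n) phi" by (simp add: phi_def)
    fix e :: "'a list" assume e: "length e = Suc n"
    show "eval phi e = B' (e!0) (drop 1 e)"
      unfolding B'_def phi_def using e by (simp add: nth_append cong: conj_cong)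
  qed
  have "\<exists>z. length z = n \<and> (\<forall>t>0. B' t z)"
  proof (rule Suc.IH[OF defB', of "max (c + R) (R + c)"], goal_cases)
    case 1
    show ?case
    proof (intro allI impI)
      fix t :: 'a assume t: "0 < t"
      obtain x where x: "length x = Suc n" "B t x" "gabs (x!0 - a) < t" using a[OF t] t unfolding A1_def by blast
      show "\<exists>z. B' t z" unfolding B'_def
        using x by (intro exI[of _ "drop 1 x"]) (auto simp: vdist_refl)
    qed
  next
    case 2 then show ?case unfolding B'_def by blast
  next
    case 3
    show ?case
    proof (intro allI impI)
      fix t z i assume t: "0 < t" and z: "B' t z" and i: "i < n"
      obtain x where x: "length x = Suc n" "B t x" "vdist z (drop 1 x) < c"
        using z c unfolding B'_def by blast
      have "length z = n" using z unfolding B'_def by blast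
      then have "gabs (z!i - x!(Suc i)) < c" using x(3) x(1) i by (simp add: vdist_less)
      then have "gabs (z!i - x!(Suc i)) \<le> c" by simp
      moreover have "gabs (x!(Suc i)) \<le> R" using bd t x i by simp
      ultimately have "gabs ((z!i - x!(Suc i)) + x!(Suc i)) \<le> max (c + R) (R + c)" by (rule gabs_add_le)
      then show "gabs (z!i) \<le> max (c + R) (R + c)" by simp
    qed
  next
    case 4
    show ?case
    proof (intro allI impI)
      fix t :: 'a and z assume t: "0 < t" and lz: "length z = n" and h: "\<forall>u>0. \<exists>y. B' t y \<and> vdist z y < u"
      show "B' t z" unfolding B'_def
      proof (intro conjI allI impI lz)
        fix u :: 'a assume u: "0 < u"
        obtain u' where u': "0 < u'" "u' + u' \<le> u" using half[OF u] by blast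
        obtain y where y: "B' t y" "vdist z y < u'" using h u' by blast
        obtain x where x: "length x = Suc n" "B t x" "gabs (x!0 - a) < t" "vdist y (drop 1 x) < u'"
          using y(1) u' unfolding B'_def by blast
        have ly: "length y = n" using y(1) unfolding B'_def by blast
        have "vdist z (drop 1 x) < u' + u'" using lz ly x(1) y(2) x(4) by (intro vdist_tri) auto
        then have "vdist z (drop 1 x) < u" using u' by simp
        then show "\<exists>x. length x = Suc n \<and> B t x \<and> gabs (x!0 - a) < t \<and> vdist z (drop 1 x) < u"
          using x by blast
      qed
    qed
  next
    case 5
    show ?case
    proof (intro allI impI)
      fix s t :: 'a and z assume "0 < s" "s \<le> t" "B' s z"
      then show "B' t z" unfolding B'_def using mn by (meson less_le_trans)
    qed
  qed
  then obtain z where z: "length z = n" "\<And>t. 0 < t \<Longrightarrow> B' t z" by blast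
  have "B t (a # z)" if t: "0 < t" for t
  proof -
  have "\<forall>u>0. \<exists>y. B t y \<and> vdist (a # z) y < u"
  proof (intro allI impI)
    fix u :: 'a assume u: "0 < u"
    define s where "s = min t u"
    have s: "0 < s" "s \<le> t" "s \<le> u" using t u by (auto simp: s_def)
    obtain x where x: "length x = Suc n" "B s x" "gabs (x!0 - a) < s" "vdist z (drop 1 x) < u"
      using z(2)[OF s(1)] u unfolding B'_def by blast
    have "B t x" using mn s x by blast
    moreover have "x = x!0 # drop 1 x" using x(1) by (cases x) auto
    moreover have "gabs (a - x!0) < u" using x(3) s by (simp add: gabs_commute)
    ultimately have "B t x \<and> vdist (a # z) x < u" using x(4) by (metis vdist_Cons)
    then show "\<exists>y. B t y \<and> vdist (a # z) y < u" by blast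
  qed
  then show ?thesis using cl t z(1) by simp
  qed
  then show ?case using z(1) by (intro exI[of _ "a # z"]) auto
qed

lemma main:
  assumes DC: "D m C" and DP: "D k P" and clC: "closed_in_tuples m C" and bdC: "bounded_in_tuples C"
    and df: "definable_function D m k C P f" and eq: "equi_continuous C P f"
  shows "uniformly_equi_continuous C P f"
proof (rule ccontr)
  assume "\<not> uniformly_equi_continuous C P f"
  then obtain \<epsilon> :: 'a where \<epsilon>: "0 < \<epsilon>" and bad: "\<And>d. 0 < d \<Longrightarrow> \<exists>p\<in>P. \<exists>x\<in>C. \<exists>x'\<in>C.
      vdist x x' < d \<and> \<not> gabs (f x p - f x' p) < \<epsilon>"
    unfolding uniformly_equi_continuous_def by blast
  have lenC: "x \<in> C \<Longrightarrow> length x = m" for x using D_sub[OF DC] by (auto simp: tuples_def)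
  have lenP: "p \<in> P \<Longrightarrow> length p = k" for p using D_sub[OF DP] by (auto simp: tuples_def)
  define G where "G = {x @ p @ [f x p] | x p. x \<in> C \<and> p \<in> P}"
  have DG: "D (m + k + 1) G" using df by (simp add: definable_function_def G_def)
  then have eDG[simp]: "\<exists>j. D j G" by blast
  have eDC[simp]: "\<exists>j. D j C" using DC by blast
  have eDP[simp]: "\<exists>j. D j P" using DP by blast
  have memG: "x @ p @ [v] \<in> G \<longleftrightarrow> x \<in> C \<and> p \<in> P \<and> v = f x p" if "length x = m" "length p = k" for x p v
  proof
    assume "x @ p @ [v] \<in> G"
    then obtain x' p' where h: "x @ p @ [v] = x' @ p' @ [f x' p']" "x' \<in> C" "p' \<in> P" unfolding G_def by blast
    then have "length x' = m" "length p' = k" using lenC lenP by auto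
    then have "x = x'" "p @ [v] = p' @ [f x' p']" using h(1) that by (auto simp: append_eq_append_conv)
    then show "x \<in> C \<and> p \<in> P \<and> v = f x p" using h that \<open>length p' = k\<close> by (auto simp: append_eq_append_conv)
  next
    assume "x \<in> C \<and> p \<in> P \<and> v = f x p" then show "x @ p @ [v] \<in> G" unfolding G_def by blast
  qed
  have inC: "z \<in> C" if lz: "length z = m" and ap: "\<forall>u>0. \<exists>x. x \<in> C \<and> vdist z x < u" for z
  proof (rule ccontr)
    assume "z \<notin> C"
    then have "z \<in> tuples m - C" using lz by (simp add: tuples_def)
    then obtain e where e: "0 < e" "\<forall>y \<in> tuples m. vdist z y < e \<longrightarrow> y \<notin> C"
      using clC unfolding closed_in_tuples_def by blast
    obtain x where "x \<in> C" "vdist z x < e" using ap e by blast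
    then show False using e lenC[of x] by (auto simp: tuples_def)
  qed
  obtain R where R: "\<And>x. x \<in> C \<Longrightarrow> vnorm x \<le> R" using bdC unfolding bounded_in_tuples_def by blast
  define Q where "Q t x \<longleftrightarrow> (\<exists>p. length p = k \<and> p \<in> P \<and> (\<exists>x'. length x' = m \<and> x' \<in> C \<and> vdist x x' < t \<and>
       (\<exists>v w. x @ p @ [v] \<in> G \<and> x' @ p @ [w] \<in> G \<and> \<not> gabs (v - w) < \<epsilon>)))" for t x
  define Bf where "Bf t z \<longleftrightarrow> length z = m \<and> (\<forall>u>0. \<exists>x. length x = m \<and> x \<in> C \<and> vdist z x < u \<and> Q t x)" for t z
  define phi where "phi = Cnj fT (All (Imp (fPos 0) (ExB m (Cnj (Atm C (\<lambda>e. take m e))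
     (Cnj (fVd (m+2) 0 m m) (ExB k (Cnj (Atm P (\<lambda>e. take k e)) (ExB m (Cnj (Atm C (\<lambda>e. take m e))
     (Cnj (fVd (m+k) 0 m (m+m+k+1)) (Ex (Ex (Cnj (Atm G (\<lambda>e. take m (drop (Suc (Suc (m+k))) e) @ take k (drop (Suc (Suc m)) e) @ [e!1]))
       (Cnj (Atm G (\<lambda>e. take m (drop 2 e) @ take k (drop (Suc (Suc m)) e) @ [e!0])) (Neg (fGLc 1 0 \<epsilon>))))))))))))))))"
  have defB: "Def (Suc m) (\<lambda>e. Bf (e!0) (drop 1 e))"
  proof (rule Def_fm[where p = phi])
    show "wf (Suc m) phi" by (simp add: phi_def)
    fix e :: "'a list" assume e: "length e = Suc m"
    show "eval phi e = Bf (e!0) (drop 1 e)"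
      unfolding Bf_def Q_def phi_def using e by (simp add: nth_append cong: conj_cong)
  qed
  obtain c :: 'a where c: "0 < c" using gt_ex by blast
  have BfC: "z \<in> C" if bz: "Bf t z" for t z
  proof (rule inC)
    show "length z = m" using bz by (simp add: Bf_def)
    show "\<forall>u>0. \<exists>x. x \<in> C \<and> vdist z x < u" using bz unfolding Bf_def by blast
  qed
  have "\<exists>x. length x = m \<and> (\<forall>t>0. Bf t x)"
  proof (rule LM[OF defB, of R], goal_cases)
    case 1
    show ?case
    proof (intro allI impI)
      fix t :: 'a assume t: "0 < t"
      obtain p x x' where h: "p \<in> P" "x \<in> C" "x' \<in> C" "vdist x x' < t" "\<not> gabs (f x p - f x' p) < \<epsilon>"
        using bad[OF t] by blast
      have G1: "x @ p @ [f x p] \<in> G" "x' @ p @ [f x' p] \<in> G" using h unfolding G_def by blast+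
      have l: "length x = m" "length x' = m" "length p = k" using h lenC lenP by auto
      have "Q t x" unfolding Q_def using h l G1 by blast
      then have "Bf t x" unfolding Bf_def using l h(2) vdist_refl by blast
      then show "\<exists>z. Bf t z" by blast
    qed
  next
    case 2 then show ?case by (simp add: Bf_def)
  next
    case 3
    show ?case
    proof (intro allI impI)
      fix t z i assume "0 < t" "Bf t z" "i < m"
      then have "z \<in> C" "length z = m" using BfC[of t z] by (auto simp: Bf_def)
      then have "vnorm z \<le> R" using R by blast
      then show "gabs (z!i) \<le> R" using \<open>length z = m\<close> \<open>i < m\<close> by (auto simp: vnorm_le)
    qed
  next
    case 4
    show ?case
    proof (intro allI impI)
      fix t :: 'a and z assume t: "0 < t" and lz: "length z = m" and h: "\<forall>u>0. \<exists>y. Bf t y \<and> vdist z y < u"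
      show "Bf t z" unfolding Bf_def
      proof (intro conjI allI impI lz)
        fix u :: 'a assume u: "0 < u"
        obtain u' where u': "0 < u'" "u' + u' \<le> u" using half[OF u] by blast
        obtain y where y: "Bf t y" "vdist z y < u'" using h u' by blast
        have ly: "length y = m" using y(1) unfolding Bf_def by blast
        obtain x where x: "length x = m" "x \<in> C" "vdist y x < u'" "Q t x"
          using y(1) u' unfolding Bf_def by blast
        have "vdist z x < u' + u'" using lz ly x(1) y(2) x(3) by (intro vdist_tri) auto
        then have "vdist z x < u" using u' by simp
        then show "\<exists>x. length x = m \<and> x \<in> C \<and> vdist z x < u \<and> Q t x"
          using x by blast
      qed
    qed
  next
    case 5
    show ?case
    proof (intro allI impI)
      fix s t :: 'a and z assume st: "0 < s" "s \<le> t" "Bf s z"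
      have "Q t x" if qs: "Q s x" for x
      proof -
        obtain p x' v w where h: "length p = k" "p \<in> P"
          "length x' = m" "x' \<in> C" "vdist x x' < s" "x @ p @ [v] \<in> G" "x' @ p @ [w] \<in> G" "\<not> gabs (v - w) < \<epsilon>"
          using qs unfolding Q_def by blast
        have "vdist x x' < t" using h(5) st(2) by simp
        then show ?thesis unfolding Q_def using h by blast
      qed
      then show "Bf t z" using st(3) unfolding Bf_def by blast
    qed
  qed
  then obtain xs where xs: "length xs = m" "\<And>t. 0 < t \<Longrightarrow> Bf t xs" by blast
  have xsC: "xs \<in> C" using BfC xs(2)[OF c] .
  obtain e' where e': "0 < e'" "e' + e' \<le> \<epsilon>" using half[OF \<epsilon>] by blast
  obtain d where d: "0 < d" "\<And>p x'. p \<in> P \<Longrightarrow> x' \<in> C \<Longrightarrow> vdist xs x' < d \<Longrightarrow> gabs (f xs p - f x' p) < e'"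
    using eq e' xsC unfolding equi_continuous_def by meson
  obtain \<delta> where \<delta>: "0 < \<delta>" "\<delta> + \<delta> \<le> d" using half[OF d(1)] by blast
  obtain x where x: "length x = m" "x \<in> C" "vdist xs x < \<delta>" "Q \<delta> x"
    using xs(2)[OF \<delta>(1)] \<delta>(1) unfolding Bf_def by blast
  obtain p x' v w where h: "length p = k" "p \<in> P"
     "length x' = m" "x' \<in> C" "vdist x x' < \<delta>" "x @ p @ [v] \<in> G" "x' @ p @ [w] \<in> G" "\<not> gabs (v - w) < \<epsilon>"
    using x(4) unfolding Q_def by blast
  have vw: "v = f x p" "w = f x' p" using h x memG by auto
  have "\<delta> + 0 < \<delta> + \<delta>" using \<delta>(1) by (rule addl_less)
  then have dd: "\<delta> < d" using \<delta>(2) by simp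
  have "vdist xs x' < \<delta> + \<delta>" using xs(1) x(1) h(3) x(3) h(5) by (intro vdist_tri) auto
  then have 1: "gabs (f xs p - f x' p) < e'" using d(2)[OF h(2) h(4)] \<delta>(2) by simp
  have "gabs (f xs p - f x p) < e'" using d(2)[OF h(2) x(2)] x(3) dd by simp
  then have 2: "gabs (f x p - f xs p) < e'" by (simp add: gabs_commute)
  have "gabs ((f x p - f xs p) + (f xs p - f x' p)) < e' + e'" using 2 1 by (rule gabs_add_less)
  then have "gabs (v - w) < \<epsilon>" using e'(2) vw by (simp add: diff_split[symmetric])
  then show False using h(8) by simp
qed

end

theorem proposition2p7:
  fixes D :: "nat \<Rightarrow> 'a::{dense_linorder,no_top,no_bot,group_add} list set \<Rightarrow> bool"
    and C P :: "'a list set" and f :: "'a list \<Rightarrow> 'a list \<Rightarrow> 'a" and m k :: nat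
  assumes ordered_group: "\<And>a b c :: 'a. a \<le> b \<Longrightarrow> c + a \<le> c + b \<and> a + c \<le> b + c"
    and "definable_structure D"
    and "definably_complete D"
    and "D m C" and "D k P"
    and "closed_in_tuples m C" and "bounded_in_tuples C"
    and "definable_function D m k C P f"
  shows "equi_continuous C P f \<longleftrightarrow> uniformly_equi_continuous C P f"
proof
  interpret dcog D using assms(1-3) by unfold_locales auto
  assume "equi_continuous C P f"
  then show "uniformly_equi_continuous C P f" using main assms(4-8) by blast
next
  assume "uniformly_equi_continuous C P f"
  then show "equi_continuous C P f"
    unfolding uniformly_equi_continuous_def equi_continuous_def by blast
qed

end
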